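(* Let $X \subset \mathbb{R}^n$ be a compact real algebraic set. Then the topological disjoint union $X \sqcup X$ is a boundary; that is, there exist a real algebraic set $W \subset \mathbb{R}^m$ (for some $m$) and a point $w \in W$ such that $X \sqcup X$ is homeomorphic to the link $\operatorname{lk}(w,W)$.
   Context: All algebraic sets are algebraic subsets of real affine space $\mathbb{R}^m$. For a semialgebraic set $W \subset \mathbb{R}^m$ and $w \in W$, let $S(w,\varepsilon)$ denote the sphere of radius $\varepsilon>0$ in $\mathbb{R}^m$ centered at $w$. By the local conic structure lemma, for all sufficiently small $\varepsilon>0$ the topological type of $S(w,\varepsilon)\cap W$ is independent of $\varepsilon$; this space is called the link of $w$ in $W$ and denoted $\operatorname{lk}(w,W)$. A compact real algebraic set $X$ is called a boundary if there exist a real algebraic set $W$ and a point $w\in W$ such that $X$ is homeomorphic to $\operatorname{lk}(w,W)$. *)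

theory Defs
  imports "HOL-Analysis.Analysis"
begin

text \<open>Real affine space R^n is represented by the points of type nat \<Rightarrow> real
  all of whose coordinates with index \<ge> n vanish.  On this set the (product)
  topology of nat \<Rightarrow> real restricts to the usual Euclidean topology.\<close>

definition Rspace :: "nat \<Rightarrow> (nat \<Rightarrow> real) set" where
  "Rspace n = {x. \<forall>i\<ge>n. x i = 0}"

inductive_set poly_fun :: "nat \<Rightarrow> ((nat \<Rightarrow> real) \<Rightarrow> real) set" for n :: nat where
  const: "(\<lambda>x. c) \<in> poly_fun n"
| var: "i < n \<Longrightarrow> (\<lambda>x. x i) \<in> poly_fun n"
| add: "p \<in> poly_fun n \<Longrightarrow> q \<in> poly_fun n \<Longrightarrow> (\<lambda>x. p x + q x) \<in> poly_fun n"
| mult: "p \<in> poly_fun n \<Longrightarrow> q \<in> poly_fun n \<Longrightarrow> (\<lambda>x. p x * q x) \<in> poly_fun n"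

definition algebraic_set :: "nat \<Rightarrow> (nat \<Rightarrow> real) set \<Rightarrow> bool" where
  "algebraic_set n S \<longleftrightarrow>
     (\<exists>F. finite F \<and> F \<subseteq> poly_fun n \<and> S = {x \<in> Rspace n. \<forall>f\<in>F. f x = 0})"

definition Rsphere :: "nat \<Rightarrow> (nat \<Rightarrow> real) \<Rightarrow> real \<Rightarrow> (nat \<Rightarrow> real) set" where
  "Rsphere n w e = {x \<in> Rspace n. (\<Sum>i<n. (x i - w i)^2) = e^2}"

definition homeomorphic_to_link ::
    "'a topology \<Rightarrow> nat \<Rightarrow> (nat \<Rightarrow> real) set \<Rightarrow> (nat \<Rightarrow> real) \<Rightarrow> bool" where
  "homeomorphic_to_link T m W w \<longleftrightarrow>
     (\<exists>e0>0. \<forall>e. 0 < e \<and> e < e0 \<longrightarrow>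
        T homeomorphic_space top_of_set (Rsphere m w e \<inter> W))"

definition double :: "(nat \<Rightarrow> real) set \<Rightarrow> (bool \<times> (nat \<Rightarrow> real)) topology" where
  "double X = sum_topology (\<lambda>_. top_of_set X) (UNIV :: bool set)"

end

theory Submission
  imports Defs
begin

definition nsq :: "nat \<Rightarrow> (nat \<Rightarrow> real) \<Rightarrow> real" where
  "nsq k z = (\<Sum>i<k. (z i)^2)"

lemma poly_fun_local:
  assumes "p \<in> poly_fun n" "\<And>i. i < n \<Longrightarrow> x i = y i"
  shows "p x = p y"
  using assms by (induction rule: poly_fun.induct) auto

lemma poly_fun_mono:
  assumes "p \<in> poly_fun n" "n \<le> k"
  shows "p \<in> poly_fun k"
  using assms by (induction rule: poly_fun.induct) (auto intro: poly_fun.intros)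

lemma poly_fun_pow:
  assumes "p \<in> poly_fun k"
  shows "(\<lambda>z. p z ^ d) \<in> poly_fun k"
proof (induction d)
  case 0 then show ?case using poly_fun.const[of 1] by simp
next
  case (Suc d) then show ?case using poly_fun.mult[OF assms Suc] by simp
qed

lemma nsq_poly_aux: "j \<le> k \<Longrightarrow> (\<lambda>z. \<Sum>i<j. (z i)^2) \<in> poly_fun k"
proof (induction j)
  case 0 then show ?case using poly_fun.const[of 0] by simp
next
  case (Suc j)
  have "(\<lambda>z. z j * z j) \<in> poly_fun k"
    using Suc.prems by (intro poly_fun.mult poly_fun.var) auto
  then have "(\<lambda>z. (\<Sum>i<j. (z i)^2) + z j * z j) \<in> poly_fun k"
    using Suc by (intro poly_fun.add) auto
  then show ?case by (simp add: power2_eq_square)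
qed

lemma nsq_poly: "nsq k \<in> poly_fun k"
  using nsq_poly_aux[of k k] unfolding nsq_def by simp

lemma homog:
  assumes "p \<in> poly_fun n"
  shows "\<exists>D P. P \<in> poly_fun (Suc n) \<and>
    (\<forall>z. nsq (Suc n) z \<noteq> 0 \<longrightarrow> P z = nsq (Suc n) z ^ D * p (\<lambda>i. z i / nsq (Suc n) z))"
  using assms
proof (induction rule: poly_fun.induct)
  case (const c)
  show ?case by (rule exI[of _ 0], rule exI[of _ "\<lambda>x. c"]) (auto intro: poly_fun.intros)
next
  case (var i)
  show ?case by (rule exI[of _ 1], rule exI[of _ "\<lambda>x. x i"]) (use var in \<open>auto intro: poly_fun.intros\<close>)
next
  case (add p q)
  then obtain Dp Pp Dq Pq where p: "Pp \<in> poly_fun (Suc n)"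
    "\<forall>z. nsq (Suc n) z \<noteq> 0 \<longrightarrow> Pp z = nsq (Suc n) z ^ Dp * p (\<lambda>i. z i / nsq (Suc n) z)"
    and q: "Pq \<in> poly_fun (Suc n)"
    "\<forall>z. nsq (Suc n) z \<noteq> 0 \<longrightarrow> Pq z = nsq (Suc n) z ^ Dq * q (\<lambda>i. z i / nsq (Suc n) z)"
    by blast
  let ?P = "\<lambda>z. (\<lambda>z. nsq (Suc n) z ^ Dq) z * Pp z + (\<lambda>z. nsq (Suc n) z ^ Dp) z * Pq z"
  have "?P \<in> poly_fun (Suc n)"
    by (intro poly_fun.add poly_fun.mult poly_fun_pow nsq_poly p q)
  moreover have "\<forall>z. nsq (Suc n) z \<noteq> 0 \<longrightarrow> ?P z = nsq (Suc n) z ^ (Dp + Dq) *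
      (p (\<lambda>i. z i / nsq (Suc n) z) + q (\<lambda>i. z i / nsq (Suc n) z))"
    using p(2) q(2) by (simp add: power_add algebra_simps)
  ultimately show ?case by blast
next
  case (mult p q)
  then obtain Dp Pp Dq Pq where p: "Pp \<in> poly_fun (Suc n)"
    "\<forall>z. nsq (Suc n) z \<noteq> 0 \<longrightarrow> Pp z = nsq (Suc n) z ^ Dp * p (\<lambda>i. z i / nsq (Suc n) z)"
    and q: "Pq \<in> poly_fun (Suc n)"
    "\<forall>z. nsq (Suc n) z \<noteq> 0 \<longrightarrow> Pq z = nsq (Suc n) z ^ Dq * q (\<lambda>i. z i / nsq (Suc n) z)"
    by blast
  let ?P = "\<lambda>z. Pp z * Pq z"
  have "?P \<in> poly_fun (Suc n)"
    by (intro poly_fun.mult p q)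
  moreover have "\<forall>z. nsq (Suc n) z \<noteq> 0 \<longrightarrow> ?P z = nsq (Suc n) z ^ (Dp + Dq) *
      (p (\<lambda>i. z i / nsq (Suc n) z) * q (\<lambda>i. z i / nsq (Suc n) z))"
    using p(2) q(2) by (simp add: power_add algebra_simps)
  ultimately show ?case by blast
qed

lemma cont_coord [continuous_intros]: "continuous_on S (\<lambda>x::nat\<Rightarrow>real. x i)"
  by (rule continuous_on_subset[OF continuous_on_product_coordinates]) auto

lemma continuous_map_sum_topologyI:
  assumes "\<And>i. i \<in> I \<Longrightarrow> continuous_map (X i) Y (\<lambda>x. f (i,x))"
  shows "continuous_map (sum_topology X I) Y f"
  unfolding continuous_map_def
proof (intro conjI allI impI)
  show "f \<in> topspace (sum_topology X I) \<rightarrow> topspace Y"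
    using assms by (fastforce simp: continuous_map_def Pi_iff)
next
  fix U assume U: "openin Y U"
  show "openin (sum_topology X I) {x \<in> topspace (sum_topology X I). f x \<in> U}"
    unfolding openin_sum_topology
  proof (intro conjI ballI)
    fix i assume i: "i \<in> I"
    have "{x. (i, x) \<in> {x \<in> topspace (sum_topology X I). f x \<in> U}} =
          {x \<in> topspace (X i). f (i,x) \<in> U}" using i by auto
    then show "openin (X i) {x. (i, x) \<in> {x \<in> topspace (sum_topology X I). f x \<in> U}}"
      using assms[OF i] U by (simp add: continuous_map_def)
  qed auto
qed

lemma nsq_Suc: "nsq (Suc k) z = nsq k z + (z k)^2"
  by (simp add: nsq_def)

theorem proposition4p1:
  fixes n :: nat and X :: "(nat \<Rightarrow> real) set"
  assumes "algebraic_set n X" and "compact X"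
  shows "\<exists>m W w. algebraic_set m W \<and> w \<in> W \<and> homeomorphic_to_link (double X) m W w"
proof -
  obtain F where F: "finite F" "F \<subseteq> poly_fun n" and XF: "X = {x \<in> Rspace n. \<forall>f\<in>F. f x = 0}"
    using assms(1) unfolding algebraic_set_def by blast
  have "\<forall>f\<in>F. \<exists>D P. P \<in> poly_fun (Suc n) \<and>
    (\<forall>z. nsq (Suc n) z \<noteq> 0 \<longrightarrow> P z = nsq (Suc n) z ^ D * f (\<lambda>i. z i / nsq (Suc n) z))"
    using F homog by blast
  then obtain DD PP where DP: "\<And>f. f \<in> F \<Longrightarrow> PP f \<in> poly_fun (Suc n) \<and>
    (\<forall>z. nsq (Suc n) z \<noteq> 0 \<longrightarrow> PP f z = nsq (Suc n) z ^ DD f * f (\<lambda>i. z i / nsq (Suc n) z))"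
    by metis
  define G where "G = (\<lambda>f z. nsq (Suc n) z * PP f z) ` F"
  define W where "W = {z \<in> Rspace (Suc n). \<forall>g\<in>G. g z = 0}"
  define w :: "nat \<Rightarrow> real" where "w = (\<lambda>_. 0)"
  have alg: "algebraic_set (Suc n) W"
    unfolding algebraic_set_def
  proof (intro exI conjI)
    show "finite G" using F by (simp add: G_def)
    show "G \<subseteq> poly_fun (Suc n)"
      unfolding G_def using DP by (auto intro!: poly_fun.mult nsq_poly)
  qed (simp add: W_def)
  have wW: "w \<in> W"
    by (auto simp: W_def G_def w_def Rspace_def nsq_def)
  have "compact (nsq n ` X)"
    by (rule compact_continuous_image[OF _ assms(2)]) (unfold nsq_def, intro continuous_intros)
  then obtain B0 where "\<forall>y\<in>nsq n ` X. norm y \<le> B0"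
    using compact_imp_bounded bounded_iff by metis
  then obtain B where B: "B \<ge> 0" "\<And>x. x \<in> X \<Longrightarrow> nsq n x \<le> B"
    by (metis abs_le_D1 max.cobounded1 max.cobounded2 order_trans image_eqI real_norm_def)
  have link: "homeomorphic_to_link (double X) (Suc n) W w"
    unfolding homeomorphic_to_link_def
  proof (intro exI conjI allI impI)
    show "0 < 1 / (B + 1)" using B by simp
    fix e :: real assume e: "0 < e \<and> e < 1 / (B + 1)"
    have e0: "e > 0" using e by auto
    have eB: "e * (B + 1) < 1" using e B by (simp add: pos_less_divide_eq)
    have "0 \<le> e * B" using B e0 by simp
    then have e1: "e \<le> 1" using eB by (simp add: algebra_simps)
    have eB2: "e^2 * B < 1"
    proof -
      have "e^2 * B = e * (e * B)" by (simp add: power2_eq_square)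
      also have "\<dots> \<le> e * B" using e1 e0 B by (simp add: mult_left_le_one_le mult_nonneg_nonneg)
      finally show ?thesis using eB e0 by (simp add: algebra_simps)
    qed
    define S where "S = Rsphere (Suc n) w e \<inter> W"
    define restr where "restr = (\<lambda>z::nat\<Rightarrow>real. \<lambda>i. if i < n then z i / e^2 else 0)"
    have restrR: "restr z \<in> Rspace n" for z by (simp add: restr_def Rspace_def)
    have memS: "z \<in> S \<longleftrightarrow> z \<in> Rspace (Suc n) \<and> nsq (Suc n) z = e^2 \<and> restr z \<in> X" for z
    proof (cases "z \<in> Rspace (Suc n) \<and> nsq (Suc n) z = e^2")
      case True
      then have ne: "nsq (Suc n) z \<noteq> 0" using e0 by simp
      have "(\<forall>g\<in>G. g z = 0) \<longleftrightarrow> (\<forall>f\<in>F. f (restr z) = 0)"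
      proof -
        have "(\<lambda>i. z i / nsq (Suc n) z) = (\<lambda>i. z i / e^2)" using True by simp
        have eq: "f (\<lambda>i. z i / nsq (Suc n) z) = f (restr z)" if "f \<in> F" for f
          using True F that by (intro poly_fun_local[of f n]) (auto simp: restr_def)
        have "(\<lambda>f z. nsq (Suc n) z * PP f z) f z = 0 \<longleftrightarrow> f (restr z) = 0" if "f \<in> F" for f
          using DP[OF that] ne eq[OF that] by simp
        then show ?thesis by (auto simp: G_def)
      qed
      then show ?thesis using True restrR
        by (auto simp: S_def W_def Rsphere_def w_def nsq_def XF)
    next
      case False
      then show ?thesis by (auto simp: S_def W_def Rsphere_def w_def nsq_def)
    qed
    define h where "h = (\<lambda>(p::bool \<times> (nat\<Rightarrow>real)) i. if i < n then e^2 * snd p i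
        else if i = n then (if fst p then 1 else -1) * e * sqrt (1 - e^2 * nsq n (snd p)) else 0)"
    have XR: "x \<in> Rspace n" if "x \<in> X" for x using that XF by auto
    have nsq_h: "nsq n (h (b,x)) = e^4 * nsq n x" for b x
    proof -
      have "nsq n (h (b,x)) = (\<Sum>i<n. e^4 * (x i)^2)"
        unfolding nsq_def h_def by (intro sum.cong) (auto simp: power_mult_distrib)
      then show ?thesis by (simp add: nsq_def sum_distrib_left)
    qed
    have restr_h: "restr (h (b,x)) = x" if "x \<in> X" for b x
      using XR[OF that] e0 by (auto simp: restr_def h_def Rspace_def fun_eq_iff)
    have pos: "1 - e^2 * nsq n x > 0" if "x \<in> X" for x
    proof -
      have "e^2 * nsq n x \<le> e^2 * B" using B(2)[OF that] by (simp add: mult_left_mono)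
      then show ?thesis using eB2 by linarith
    qed
    have hS: "h (b,x) \<in> S" if "x \<in> X" for b x
    proof -
      have "nsq (Suc n) (h (b,x)) = e^4 * nsq n x + e^2 * (1 - e^2 * nsq n x)"
        unfolding nsq_Suc nsq_h using pos[OF that]
        by (simp add: h_def power_mult_distrib)
      also have "\<dots> = e^2" by (simp add: algebra_simps power2_eq_square power4_eq_xxxx)
      finally show ?thesis unfolding memS using restr_h[OF that] that
        by (auto simp: Rspace_def h_def)
    qed
    have top: "topspace (double X) = UNIV \<times> X"
      by (auto simp: double_def)
    have cont: "continuous_map (double X) (top_of_set S) h"
      unfolding double_def
    proof (rule continuous_map_sum_topologyI)
      fix b :: bool
      have "continuous_on X (\<lambda>x. h (b,x))"
      proof (rule continuous_on_coordinatewise_then_product)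
        fix i
        show "continuous_on X (\<lambda>x. h (b, x) i)"
          proof (cases "i < n")
          case True then show ?thesis by (simp add: h_def) (intro continuous_intros)
        next
          case False
          show ?thesis
          proof (cases "i = n")
            case True then show ?thesis using False
              by (simp add: h_def nsq_def) (auto intro!: continuous_intros)
          qed (use False in \<open>simp add: h_def\<close>)
        qed
      qed
      then show "continuous_map (top_of_set X) (top_of_set S) (\<lambda>x. h (b,x))"
        using hS by (auto simp: continuous_map_in_subtopology continuous_map_iff_continuous)
    qed
    have cpt: "compact_space (double X)"
    proof -
      have cX: "compactin (top_of_set X) X"
        using assms(2) by (simp add: compactin_subtopology compactin_euclidean_iff)
      have "compactin (double X) ((\<lambda>x. (True,x)) ` X \<union> (\<lambda>x. (False,x)) ` X)"
        unfolding double_def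
        by (intro compactin_Un image_compactin[OF cX] continuous_map_component_injection) auto
      moreover have "(\<lambda>x. (True,x)) ` X \<union> (\<lambda>x. (False,x)) ` X = UNIV \<times> X"
        by auto
      ultimately show ?thesis using top by (simp add: compact_space_def)
    qed
    have surj: "h ` topspace (double X) = topspace (top_of_set S)"
    proof
      show "h ` topspace (double X) \<subseteq> topspace (top_of_set S)"
        using hS top by auto
    next
      show "topspace (top_of_set S) \<subseteq> h ` topspace (double X)"
      proof
        fix z assume "z \<in> topspace (top_of_set S)"
        then have z: "z \<in> S" by simp
        then have zR: "z \<in> Rspace (Suc n)" and zn: "nsq (Suc n) z = e^2" and zX: "restr z \<in> X"
          using memS by auto
        have nr: "nsq n (restr z) = nsq n z / e^4"
          unfolding nsq_def restr_def by (simp add: sum_divide_distrib power_divide flip: power_mult)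
        have "1 - e^2 * nsq n (restr z) = (z n)^2 / e^2"
          using zn e0 unfolding nr nsq_Suc by (simp add: field_simps power2_eq_square power4_eq_xxxx)
        then have sq: "e * sqrt (1 - e^2 * nsq n (restr z)) = \<bar>z n\<bar>"
          using e0 by (simp add: real_sqrt_divide)
        have "z = h (z n > 0, restr z)"
        proof
          fix i
          show "z i = h (z n > 0, restr z) i"
          proof (cases "i < n")
            case True then show ?thesis using e0 by (simp add: h_def restr_def)
          next
            case False
            show ?thesis
            proof (cases "i = n")
              case True
              then show ?thesis using sq False by (auto simp: h_def)
            next
              case False2: False
              then show ?thesis using False zR by (simp add: h_def Rspace_def)
            qed
          qed
        qed
        then show "z \<in> h ` topspace (double X)" using zX top by auto
      qed
    qed
    have inj: "inj_on h (topspace (double X))"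
    proof (rule inj_onI)
      fix p q assume p: "p \<in> topspace (double X)" and q: "q \<in> topspace (double X)" and hpq: "h p = h q"
      obtain b x where bx: "p = (b,x)" "x \<in> X" using p top by auto
      obtain c y where cy: "q = (c,y)" "y \<in> X" using q top by auto
      have xy: "x = y" using restr_h[OF bx(2), of b] restr_h[OF cy(2), of c] hpq bx cy by simp
      have "h (b,x) n = h (c,x) n" using hpq bx cy xy by simp
      then have "(if b then 1 else -1) * e * sqrt (1 - e^2 * nsq n x) =
                 (if c then 1 else -1) * e * sqrt (1 - e^2 * nsq n x)"
        by (simp add: h_def)
      moreover have "e * sqrt (1 - e^2 * nsq n x) > 0" using pos[OF bx(2)] e0 by simp
      ultimately have "b = c" by (cases b; cases c) auto
      then show "p = q" using bx cy xy by simp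
    qed
    have "homeomorphic_map (double X) (top_of_set S) h"
      by (rule continuous_imp_homeomorphic_map[OF cont cpt _ surj inj])
         (simp add: Hausdorff_space_subtopology)
    then show "double X homeomorphic_space top_of_set (Rsphere (Suc n) w e \<inter> W)"
      using homeomorphic_map_imp_homeomorphic_space S_def by blast
  qed
  show ?thesis using alg wW link by blast
qed

end
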